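(* In the setting of the context, the linear operator $\mathcal M:\mathbb S^n\to\mathbb S^n$ satisfies: (a) $\mathcal M$ is firmly nonexpansive with respect to the Frobenius norm, i.e., $\langle\mathcal M(H),H\rangle\ge\|\mathcal M(H)\|_F^2$ for all $H$; (b) the sequence of operators $\mathcal M^k$ converges to $\Pi_{\mathrm{Fix}(\mathcal M)}$ as $k\to\infty$; (c) $H\in\mathrm{Fix}(\mathcal M)$ if and only if $H_O=0$, $Q_\star\begin{pmatrix}H_X&0\\0&0\end{pmatrix}Q_\star^\top\in\mathcal N(\mathcal A)$, and $Q_\star\begin{pmatrix}0&0\\0&H_S\end{pmatrix}Q_\star^\top\in\mathcal R(\mathcal A^* )$; (d) $\|\mathcal M-\Pi_{\mathrm{Fix}(\mathcal M)}\|_{\mathrm{op}}<1$.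
   Context: $\mathbb S^n$: real symmetric matrices with $\langle X,Y\rangle=\operatorname{tr}(XY)$ and Frobenius norm. Data $A_1,\dots,A_m\in\mathbb S^n$ defining $\mathcal AX=(\langle A_i,X\rangle)_i$, assumed surjective; $\mathcal A^*y=\sum y_iA_i$; $\mathcal R(\mathcal A^* )$ range, $\mathcal N(\mathcal A)$ null space; $\mathcal P=\mathcal A^*(\mathcal A\mathcal A^* )^{-1}\mathcal A$, $\mathcal P^\perp=\mathrm{Id}-\mathcal P$. Let $Z_\star=X_\star-\sigma S_\star$ ($\sigma>0$) for a strictly complementary KKT point $(X_\star,y_\star,S_\star)$ of the SDP pair min $\langle C,X\rangle$ s.t. $\mathcal AX=b$, $X\succeq0$ / max $b^\top y$ s.t. $\mathcal A^*y+S=C$, $S\succeq0$ (the limit of the one-step ADMM iteration), so that for an orthogonal $Q_\star$, $Z_\star=Q_\star\operatorname{diag}(\lambda_1,\dots,\lambda_n)Q_\star^\top$ with $\lambda_1\ge\dots\ge\lambda_r>0>\lambda_{r+1}\ge\dots\ge\lambda_n$, $r=\operatorname{rank}X_\star$. $\Theta\in\mathbb R^{(n-r)\times r}$, $\Theta_{ij}=\lambda_j/(\lambda_j-\lambda_{i+r})$, $\Omega=\begin{pmatrix}E_r&\Theta^\top\\\Theta&0\end{pmatrix}$ ($E_r$ all-ones). For $H\in\mathbb S^n$ write $Q_\star^\top HQ_\star=\begin{pmatrix}H_X&H_O^\top\\H_O&H_S\end{pmatrix}$, $H_X\in\mathbb S^r$, $H_O\in\mathbb R^{(n-r)\times r}$,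 $H_S\in\mathbb S^{n-r}$. $\mathcal D(H)=Q_\star(\Omega\circ(Q_\star^\top HQ_\star))Q_\star^\top$ ($\circ$ Hadamard), $\mathcal D^\perp(H)=H-\mathcal D(H)$, $\mathcal M(H)=\mathcal P\mathcal D^\perp(H)+\mathcal P^\perp\mathcal D(H)$. $\mathrm{Fix}(\mathcal M)=\{H:\mathcal M(H)=H\}$, $\Pi_{\mathrm{Fix}(\mathcal M)}$ the orthogonal projection onto it, $\|\cdot\|_{\mathrm{op}}$ the Frobenius-induced operator norm. *)

theory Defs
  imports "HOL-Analysis.Analysis"
begin

text \<open>Symmetric matrices S^n, realised inside real^'n^'n; the Euclidean norm of
real^'n^'n is the Frobenius norm.\<close>

definition Sym :: "(real^'n^'n) set" where
  "Sym = {H. transpose H = H}"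

definition frob_inner :: "real^'n^'n \<Rightarrow> real^'n^'n \<Rightarrow> real" where
  "frob_inner X Y = trace (X ** Y)"

definition psd :: "real^'n^'n \<Rightarrow> bool" where
  "psd X \<longleftrightarrow> transpose X = X \<and> (\<forall>x. 0 \<le> x \<bullet> (X *v x))"

definition Aop :: "('m \<Rightarrow> real^'n^'n) \<Rightarrow> real^'n^'n \<Rightarrow> real^'m" where
  "Aop A X = (\<chi> i. frob_inner (A i) X)"

definition Astar :: "('m::finite \<Rightarrow> real^'n^'n) \<Rightarrow> real^'m \<Rightarrow> real^'n^'n" where
  "Astar A y = (\<Sum>i\<in>UNIV. (y $ i) *\<^sub>R A i)"

definition AAstar :: "('m::finite \<Rightarrow> real^'n^'n) \<Rightarrow> real^'m^'m" where
  "AAstar A = (\<chi> i j. frob_inner (A i) (A j))"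

definition Pop :: "('m::finite \<Rightarrow> real^'n^'n) \<Rightarrow> real^'n^'n \<Rightarrow> real^'n^'n" where
  "Pop A H = Astar A (matrix_inv (AAstar A) *v Aop A H)"

definition Pperp :: "('m::finite \<Rightarrow> real^'n^'n) \<Rightarrow> real^'n^'n \<Rightarrow> real^'n^'n" where
  "Pperp A H = H - Pop A H"

definition diagm :: "('n \<Rightarrow> real) \<Rightarrow> real^'n^'n" where
  "diagm lam = (\<chi> i j. if i = j then lam i else 0)"

text \<open>Blocks: indices with positive eigenvalue (first r) form the X-block,
indices with negative eigenvalue form the S-block.\<close>

definition Omega :: "('n \<Rightarrow> real) \<Rightarrow> real^'n^'n" where
  "Omega lam = (\<chi> i j.
     if 0 < lam i \<and> 0 < lam j then 1
     else if lam i < 0 \<and> 0 < lam j then lam j / (lam j - lam i)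
     else if 0 < lam i \<and> lam j < 0 then lam i / (lam i - lam j)
     else 0)"

definition hadamard :: "real^'n^'n \<Rightarrow> real^'n^'n \<Rightarrow> real^'n^'n" where
  "hadamard X Y = (\<chi> i j. X $ i $ j * Y $ i $ j)"

definition Dop :: "real^'n^'n \<Rightarrow> ('n \<Rightarrow> real) \<Rightarrow> real^'n^'n \<Rightarrow> real^'n^'n" where
  "Dop Q lam H = Q ** hadamard (Omega lam) (transpose Q ** H ** Q) ** transpose Q"

definition Dperp :: "real^'n^'n \<Rightarrow> ('n \<Rightarrow> real) \<Rightarrow> real^'n^'n \<Rightarrow> real^'n^'n" where
  "Dperp Q lam H = H - Dop Q lam H"

definition Mop :: "('m::finite \<Rightarrow> real^'n^'n) \<Rightarrow> real^'n^'n \<Rightarrow> ('n \<Rightarrow> real)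
                   \<Rightarrow> real^'n^'n \<Rightarrow> real^'n^'n" where
  "Mop A Q lam H = Pop A (Dperp Q lam H) + Pperp A (Dop Q lam H)"

definition FixM :: "('m::finite \<Rightarrow> real^'n^'n) \<Rightarrow> real^'n^'n \<Rightarrow> ('n \<Rightarrow> real)
                   \<Rightarrow> (real^'n^'n) set" where
  "FixM A Q lam = {H \<in> Sym. Mop A Q lam H = H}"

text \<open>Orthogonal projection onto a (closed) subspace = closest point map.\<close>

definition opnormS :: "(real^'n^'n \<Rightarrow> real^'n^'n) \<Rightarrow> real" where
  "opnormS T = (SUP H\<in>Sym. norm (T H) / norm H)"

definition blkX :: "('n \<Rightarrow> real) \<Rightarrow> real^'n^'n \<Rightarrow> real^'n^'n" where
  "blkX lam K = (\<chi> i j. if 0 < lam i \<and> 0 < lam j then K $ i $ j else 0)"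
definition blkS :: "('n \<Rightarrow> real) \<Rightarrow> real^'n^'n \<Rightarrow> real^'n^'n" where
  "blkS lam K = (\<chi> i j. if lam i < 0 \<and> lam j < 0 then K $ i $ j else 0)"
definition blkO_zero :: "('n \<Rightarrow> real) \<Rightarrow> real^'n^'n \<Rightarrow> bool" where
  "blkO_zero lam K \<longleftrightarrow> (\<forall>i j. lam i < 0 \<and> 0 < lam j \<longrightarrow> K $ i $ j = 0)"

end

theory Submission
  imports Defs
begin

lemma funpow_linear_add:
  fixes M :: "'a::real_vector \<Rightarrow> 'a"
  assumes lin: "linear M"
  shows "(M ^^ k) (a + b) = (M ^^ k) a + (M ^^ k) b"
  apply (induction k) 
  apply simp
  apply (simp add: linear_add[OF lin])
  done

lemma contraction_part:
  fixes M :: "'a::euclidean_space \<Rightarrow> 'a" and S :: "'a set"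
  assumes lin: "linear M" and sub: "subspace S" and MS: "\<forall>x\<in>S. M x \<in> S"
    and firm: "\<forall>x. (norm (M x))\<^sup>2 \<le> M x \<bullet> x"
  shows "\<exists>c. 0 \<le> c \<and> c < 1 \<and> (\<forall>k. \<forall>x\<in>S.
     norm ((M^^k) x - closest_point {x \<in> S. M x = x} x) \<le> c^k * norm x)"
proof -
  define F where "F = {x \<in> S. M x = x}"
  have M0: "M 0 = 0" using linear_0[OF lin] .
  have subF: "subspace F"
    using sub unfolding subspace_def F_def
    by (auto simp: linear_add[OF lin] linear_scale[OF lin] linear_0[OF lin])
  have clF: "closed F" by (rule closed_subspace[OF subF])
  have cvF: "convex F" by (rule subspace_imp_convex[OF subF])
  have F0: "0 \<in> F" using subF by (simp add: subspace_0)
  have FS: "F \<subseteq> S" unfolding F_def by auto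
  have nonexp: "norm (M x) \<le> norm x" for x
  proof -
    have "(norm (M x))\<^sup>2 \<le> norm (M x) * norm x"
      using firm[rule_format, of x] norm_cauchy_schwarz[of "M x" x] by linarith
    then show ?thesis
      by (metis mult_le_cancel_left norm_ge_zero power2_eq_square mult_zero_left order.trans zero_less_norm_iff mult.commute linorder_not_le less_le)
  qed
  define M' where "M' = adjoint M"
  have adj: "x \<bullet> M' y = M x \<bullet> y" for x y
    unfolding M'_def using adjoint_works[OF lin] .
  have fixadj: "M' f = f" if "M f = f" for f
  proof -
    have "(norm (M' f))\<^sup>2 = M (M' f) \<bullet> f"
      using adj[of "M' f" f] by (simp add: power2_norm_eq_inner)
    also have "\<dots> \<le> norm (M (M' f)) * norm f" by (rule norm_cauchy_schwarz)
    also have "\<dots> \<le> norm (M' f) * norm f" by (simp add: mult_right_mono nonexp)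
    finally have "norm (M' f) \<le> norm f"
      by (metis mult_le_cancel_left norm_ge_zero power2_eq_square mult_zero_left order.trans zero_less_norm_iff mult.commute linorder_not_le less_le)
    hence a: "(norm (M' f))\<^sup>2 \<le> (norm f)\<^sup>2" by (simp add: power_mono)
    have "(norm (M' f - f))\<^sup>2 = (norm (M' f))\<^sup>2 - 2 * (M' f \<bullet> f) + (norm f)\<^sup>2"
      by (simp add: power2_norm_eq_inner inner_diff inner_commute)
    also have "M' f \<bullet> f = (norm f)\<^sup>2"
      using adj[of f f] that by (simp add: inner_commute power2_norm_eq_inner)
    finally have "(norm (M' f - f))\<^sup>2 \<le> 0" using a by linarith
    thus ?thesis by simp
  qed
  define W where "W = {x \<in> S. \<forall>f\<in>F. x \<bullet> f = 0}"
  have subW: "subspace W"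
    unfolding W_def subspace_def using sub
    by (auto simp: subspace_def inner_add_left)
  have MW: "M x \<in> W" if "x \<in> W" for x
  proof -
    have "M x \<bullet> f = 0" if "f \<in> F" for f
    proof -
      have "M x \<bullet> f = x \<bullet> M' f" by (simp add: adj)
      also have "\<dots> = x \<bullet> f" using fixadj[of f] that unfolding F_def by auto
      finally show ?thesis using \<open>x \<in> W\<close> that unfolding W_def by auto
    qed
    thus ?thesis using that MS unfolding W_def by auto
  qed
  obtain c where c0: "0 \<le> c" and c1: "c < 1" and cW: "\<And>x. x \<in> W \<Longrightarrow> norm (M x) \<le> c * norm x"
  proof (cases "W \<inter> sphere 0 1 = {}")
    case True
    have "x = 0" if "x \<in> W" for x
    proof (rule ccontr)
      assume "x \<noteq> 0"
      hence "(1 / norm x) *\<^sub>R x \<in> W \<inter> sphere 0 1"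
        using that subW by (simp add: subspace_scale)
      thus False using True by auto
    qed
    thus ?thesis using that[of 0] M0 by auto
  next
    case False
    have cpt: "compact (W \<inter> sphere 0 1)"
      by (rule closed_Int_compact[OF closed_subspace[OF subW] compact_sphere])
    have cont: "continuous_on (W \<inter> sphere 0 1) (\<lambda>x. norm (M x))"
      by (intro continuous_intros linear_continuous_on linear_conv_bounded_linear[THEN iffD1, OF lin])
    obtain x0 where x0: "x0 \<in> W \<inter> sphere 0 1" and mx: "\<And>y. y \<in> W \<inter> sphere 0 1 \<Longrightarrow> norm (M y) \<le> norm (M x0)"
      using continuous_attains_sup[OF cpt False cont] by auto
    have nx0: "norm x0 = 1" using x0 by auto
    have lt: "norm (M x0) < 1"
    proof (rule ccontr)
      assume "\<not> ?thesis"
      hence e: "norm (M x0) = 1" using nonexp[of x0] nx0 by auto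
      have "(norm (M x0 - x0))\<^sup>2 = (norm (M x0))\<^sup>2 - 2 * (M x0 \<bullet> x0) + (norm x0)\<^sup>2"
        by (simp add: power2_norm_eq_inner inner_diff inner_commute)
      also have "\<dots> \<le> 0" using firm[rule_format, of x0] e nx0 by simp
      finally have "M x0 = x0" by simp
      hence "x0 \<in> F" using x0 unfolding F_def W_def by auto
      hence "x0 \<bullet> x0 = 0" using x0 unfolding W_def by auto
      thus False using nx0 by simp
    qed
    show ?thesis
    proof (rule that[of "norm (M x0)"])
      show "0 \<le> norm (M x0)" by simp
      show "norm (M x0) < 1" by (rule lt)
      fix x assume xW: "x \<in> W"
      show "norm (M x) \<le> norm (M x0) * norm x"
      proof (cases "x = 0")
        case True thus ?thesis using M0 by simp
      next
        case False
        hence "(1 / norm x) *\<^sub>R x \<in> W \<inter> sphere 0 1"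
          using xW subW by (simp add: subspace_scale)
        hence "norm (M ((1 / norm x) *\<^sub>R x)) \<le> norm (M x0)" by (rule mx)
        hence "norm (M x) / norm x \<le> norm (M x0)"
          by (simp add: linear_scale[OF lin])
        thus ?thesis using False by (simp add: divide_le_eq mult.commute)
      qed
    qed
  qed
  have iter: "(M^^k) y \<in> W \<and> norm ((M^^k) y) \<le> c^k * norm y" if "y \<in> W" for y k
  proof (induction k)
    case 0 thus ?case using that by simp
  next
    case (Suc k)
    have "norm ((M^^Suc k) y) \<le> c * norm ((M^^k) y)" using cW Suc by simp
    also have "\<dots> \<le> c * (c^k * norm y)" using Suc c0 by (simp add: mult_left_mono)
    finally show ?case using MW Suc by (simp add: mult.assoc)
  qed
  have fixk: "(M^^k) f = f" if "f \<in> F" for f k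
    using that unfolding F_def by (induction k) auto
  show ?thesis
  proof (intro exI conjI allI ballI)
    show "0 \<le> c" "c < 1" by (fact c0, fact c1)
    fix k x assume xS: "x \<in> S"
    define p where "p = closest_point F x"
    have pF: "p \<in> F" unfolding p_def by (rule closest_point_in_set[OF clF]) (use F0 in auto)
    have orth: "(x - p) \<bullet> f = 0" if "f \<in> F" for f
    proof -
      have "p + f \<in> F" "p - f \<in> F" using pF that subF by (auto simp: subspace_add subspace_diff)
      hence "(x - p) \<bullet> ((p + f) - p) \<le> 0" "(x - p) \<bullet> ((p - f) - p) \<le> 0"
        unfolding p_def using closest_point_dot[OF cvF clF] by blast+
      thus ?thesis by (simp add: inner_minus_right)
    qed
    have yW: "x - p \<in> W" unfolding W_def using orth xS pF FS sub by (auto simp: subspace_diff)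
    have "(M^^k) x = (M^^k) (x - p) + p"
      using funpow_linear_add[OF lin, of k "x - p" p] fixk[OF pF] by simp
    hence "norm ((M^^k) x - p) = norm ((M^^k) (x - p))" by simp
    also have "\<dots> \<le> c^k * norm (x - p)" using iter[OF yW] by simp
    also have "norm (x - p) \<le> norm x"
      using closest_point_le[OF clF F0, of x] unfolding p_def by (simp add: dist_norm)
    hence "c^k * norm (x - p) \<le> c^k * norm x" using c0 by (simp add: mult_left_mono)
    finally show "norm ((M^^k) x - closest_point {x \<in> S. M x = x} x) \<le> c^k * norm x"
      unfolding p_def F_def .
  qed
qed

lemma proj_isometry:
  fixes P :: "'a::real_inner \<Rightarrow> 'a"
  assumes linP: "linear P" and Pidem: "\<And>y. P (P y) = P y" and Psa: "\<And>y z. P y \<bullet> z = y \<bullet> P z"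
  shows "norm (2 *\<^sub>R P y - y) = norm y"
proof -
  have "P y \<bullet> y = P y \<bullet> P y" using Psa[of y "P y"] Pidem[of y] by (simp add: inner_commute)
  hence "(norm (2 *\<^sub>R P y - y))\<^sup>2 = (norm y)\<^sup>2"
    by (simp add: power2_norm_eq_inner inner_diff inner_commute algebra_simps)
  thus ?thesis by (simp add: power2_eq_iff_nonneg)
qed

lemma dr_identity:
  fixes P D :: "'a::real_inner \<Rightarrow> 'a"
  assumes linP: "linear P" and Pidem: "\<And>y. P (P y) = P y" and Psa: "\<And>y z. P y \<bullet> z = y \<bullet> P z"
  shows "2 *\<^sub>R (P (x - D x) + (D x - P (D x))) = x - (2 *\<^sub>R P (2 *\<^sub>R D x - x) - (2 *\<^sub>R D x - x))"
    and "norm (2 *\<^sub>R P (2 *\<^sub>R D x - x) - (2 *\<^sub>R D x - x)) = norm (2 *\<^sub>R D x - x)"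
   apply (simp add: linear_diff[OF linP] linear_add[OF linP] linear_scale[OF linP] algebra_simps scaleR_2 del: scaleR_add_right)
  by (rule proj_isometry[OF assms])

lemma dr_firm:
  fixes P D :: "'a::real_inner \<Rightarrow> 'a"
  assumes linP: "linear P" and Pidem: "\<And>y. P (P y) = P y" and Psa: "\<And>y z. P y \<bullet> z = y \<bullet> P z"
    and Dfirm: "(norm (D x))\<^sup>2 \<le> D x \<bullet> x"
  shows "(norm (P (x - D x) + (D x - P (D x))))\<^sup>2 \<le> (P (x - D x) + (D x - P (D x))) \<bullet> x"
proof -
  define N where "N = 2 *\<^sub>R P (2 *\<^sub>R D x - x) - (2 *\<^sub>R D x - x)"
  define m where "m = P (x - D x) + (D x - P (D x))"
  have e1: "2 *\<^sub>R m = x - N" and e2: "norm N = norm (2 *\<^sub>R D x - x)"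
    using dr_identity[OF linP Pidem Psa, where D=D and x=x] unfolding N_def m_def by auto
  have "(norm (2 *\<^sub>R D x - x))\<^sup>2 = (2 *\<^sub>R D x - x) \<bullet> (2 *\<^sub>R D x - x)"
    by (rule power2_norm_eq_inner)
  also have "\<dots> = 4 * (D x \<bullet> D x) - 4 * (D x \<bullet> x) + x \<bullet> x"
    by (simp add: inner_diff_left inner_diff_right inner_commute[of x "D x"])
  finally have "(norm N)\<^sup>2 = 4 * (norm (D x))\<^sup>2 - 4 * (D x \<bullet> x) + (norm x)\<^sup>2"
    using e2 by (simp add: power2_norm_eq_inner)
  hence nN: "(norm N)\<^sup>2 \<le> (norm x)\<^sup>2" using Dfirm by simp
  have m: "m = (1/2) *\<^sub>R (x - N)"
  proof -
    have "m = (1/2) *\<^sub>R (2 *\<^sub>R m)" by simp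
    thus ?thesis using e1 by simp
  qed
  have a0: "(x - N) \<bullet> (x - N) = x \<bullet> x - 2 * (x \<bullet> N) + N \<bullet> N"
    by (simp add: inner_diff_left inner_diff_right inner_commute[of N x])
  have a: "(norm m)\<^sup>2 = (1/4) * ((x \<bullet> x) - 2 * (x \<bullet> N) + N \<bullet> N)"
    unfolding m power2_norm_eq_inner a0[symmetric] by simp
  have b: "m \<bullet> x = (1/2) * (x \<bullet> x - x \<bullet> N)"
    unfolding m by (simp add: inner_diff_left inner_commute[of N x])
  have "(norm m)\<^sup>2 - m \<bullet> x = ((norm N)\<^sup>2 - (norm x)\<^sup>2) / 4"
    unfolding a b by (simp add: power2_norm_eq_inner field_simps)
  moreover have "((norm N)\<^sup>2 - (norm x)\<^sup>2) / 4 \<le> 0" using nN by simp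
  ultimately have "(norm m)\<^sup>2 \<le> m \<bullet> x" by linarith
  thus ?thesis unfolding m_def .
qed

lemma dr_fix:
  fixes P D :: "'a::real_inner \<Rightarrow> 'a"
  assumes linP: "linear P" and Pidem: "\<And>y. P (P y) = P y" and Psa: "\<And>y z. P y \<bullet> z = y \<bullet> P z"
    and fx: "P (x - D x) + (D x - P (D x)) = x"
  shows "norm (2 *\<^sub>R D x - x) = norm x"
    and "2 *\<^sub>R P (2 *\<^sub>R D x - x) - (2 *\<^sub>R D x - x) = - x"
proof -
  define N where "N = 2 *\<^sub>R P (2 *\<^sub>R D x - x) - (2 *\<^sub>R D x - x)"
  have e1: "2 *\<^sub>R x = x - N" and e2: "norm N = norm (2 *\<^sub>R D x - x)"
    using dr_identity[OF linP Pidem Psa, where D=D and x=x] fx unfolding N_def by auto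
  have "N + x = 0" using e1 by (simp add: algebra_simps scaleR_2 del: scaleR_add_right)
  hence "N = - x" by (metis add.commute neg_eq_iff_add_eq_0)
  thus "2 *\<^sub>R P (2 *\<^sub>R D x - x) - (2 *\<^sub>R D x - x) = - x" unfolding N_def .
  show "norm (2 *\<^sub>R D x - x) = norm x" using e2 \<open>N = - x\<close> by simp
qed

lemma proj_split:
  fixes P :: "'a::real_inner \<Rightarrow> 'a"
  assumes linP: "linear P" and Pidem: "\<And>y. P (P y) = P y" and Psa: "\<And>y z. P y \<bullet> z = y \<bullet> P z"
    and h: "2 *\<^sub>R P (a - b) - (a - b) = - (a + b)"
  shows "P a = 0" and "P b = b"
proof -
  have "2 *\<^sub>R b + 2 *\<^sub>R P a = 2 *\<^sub>R P b" using h by (simp add: linear_diff[OF linP] algebra_simps scaleR_2 del: scaleR_add_right)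
  hence "2 *\<^sub>R (b + P a) = 2 *\<^sub>R P b" by (metis scaleR_add_right)
  hence "b + P a = P b" by (metis scaleR_cancel_left zero_neq_numeral)
  hence pa: "P a = P b - b" by (metis add_diff_cancel_left')
  have "P a \<bullet> P a = P a \<bullet> (P b - b)" using pa by simp
  also have "\<dots> = a \<bullet> P (P b - b)" by (rule Psa)
  also have "\<dots> = 0" by (simp add: linear_diff[OF linP] Pidem)
  finally show "P a = 0" by simp
  thus "P b = b" using pa by simp
qed

lemma opnormS_bound:
  fixes T :: "real^'n^'n \<Rightarrow> real^'n^'n"
  assumes "\<And>H. H \<in> Sym \<Longrightarrow> norm (T H) \<le> c * norm H" and "0 \<le> c"
  shows "opnormS T \<le> c" and "0 \<le> opnormS T"
proof -
  have r: "norm (T H) / norm H \<le> c" if "H \<in> Sym" for H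
    using assms(1)[OF that] assms(2) by (cases "H = 0") (auto simp: divide_le_eq mult.commute)
  have t0: "transpose (0::real^'n^'n) = 0" by (simp add: transpose_def vec_eq_iff)
  have ne2: "(0::real^'n^'n) \<in> Sym" using t0 by (simp add: Sym_def)
  have ne: "(Sym::(real^'n^'n) set) \<noteq> {}" "(0::real^'n^'n) \<in> Sym" using ne2 by auto
  show "opnormS T \<le> c" unfolding opnormS_def by (rule cSUP_least[OF ne(1) r])
  have bdd: "bdd_above ((\<lambda>H. norm (T H) / norm H) ` Sym)" using r by (intro bdd_aboveI2[where M=c]) auto
  show "0 \<le> opnormS T" unfolding opnormS_def by (rule cSUP_upper2[OF bdd ne(2)]) simp
qed

lemma matrix_add_rdistrib: "((B::real^'n^'m) + C) ** A = B ** A + C ** A"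
  by (simp add: matrix_matrix_mult_def vec_eq_iff sum.distrib algebra_simps)

lemma inner_mat_sum: "(X::real^'n^'m) \<bullet> Y = (\<Sum>i\<in>UNIV. \<Sum>j\<in>UNIV. X$i$j * Y$i$j)"
  by (simp add: inner_vec_def)

lemma inner_trace: "(X::real^'n^'n) \<bullet> Y = trace (transpose X ** Y)"
  unfolding inner_mat_sum trace_def matrix_matrix_mult_def transpose_def
  by (simp, subst sum.swap, simp)

lemma frob_sym: "transpose X = X \<Longrightarrow> frob_inner X Y = X \<bullet> Y"
  unfolding frob_inner_def inner_trace by simp

lemma transpose_add: "transpose ((A::'a::semiring_1^'n^'m) + B) = transpose A + transpose B"
  by (simp add: transpose_def vec_eq_iff)
lemma transpose_diff: "transpose ((A::'a::ring_1^'n^'m) - B) = transpose A - transpose B"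
  by (simp add: transpose_def vec_eq_iff)
lemma transpose_zero: "transpose (0::'a::semiring_1^'n^'m) = 0"
  by (simp add: transpose_def vec_eq_iff)

lemma matrix_sub_ldistrib: "(A::real^'n^'m) ** (B - C) = A ** B - A ** C"
  by (simp add: matrix_matrix_mult_def vec_eq_iff sum_subtractf algebra_simps)
lemma matrix_sub_rdistrib: "((B::real^'n^'m) - C) ** A = B ** A - C ** A"
  by (simp add: matrix_matrix_mult_def vec_eq_iff sum_subtractf algebra_simps)

lemma orth_QtQ: "orthogonal_matrix Q \<Longrightarrow> transpose Q ** Q = mat 1"
  and orth_QQt: "orthogonal_matrix Q \<Longrightarrow> Q ** transpose Q = mat 1"
  by (simp_all add: orthogonal_matrix_def)

lemma unc_cj: assumes "orthogonal_matrix (Q::real^'n^'n)"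
  shows "transpose Q ** (Q ** K ** transpose Q) ** Q = K"
proof -
  have "transpose Q ** (Q ** K ** transpose Q) ** Q = (transpose Q ** Q) ** K ** (transpose Q ** Q)"
    by (simp add: matrix_mul_assoc)
  thus ?thesis using orth_QtQ[OF assms] by simp
qed

lemma cj_unc: assumes "orthogonal_matrix (Q::real^'n^'n)"
  shows "Q ** (transpose Q ** H ** Q) ** transpose Q = H"
proof -
  have "Q ** (transpose Q ** H ** Q) ** transpose Q = (Q ** transpose Q) ** H ** (Q ** transpose Q)"
    by (simp add: matrix_mul_assoc)
  thus ?thesis using orth_QQt[OF assms] by simp
qed

lemma cj_inner: "((Q::real^'n^'n) ** K ** transpose Q) \<bullet> G = K \<bullet> (transpose Q ** G ** Q)"
proof -
  have "((Q::real^'n^'n) ** K ** transpose Q) \<bullet> G = trace (Q ** (transpose K ** transpose Q ** G))"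
    unfolding inner_trace by (simp add: matrix_transpose_mul matrix_mul_assoc)
  also have "\<dots> = trace ((transpose K ** transpose Q ** G) ** Q)" by (rule trace_mul_sym)
  also have "\<dots> = K \<bullet> (transpose Q ** G ** Q)"
    unfolding inner_trace by (simp add: matrix_mul_assoc)
  finally show ?thesis .
qed

lemma cj_inner2: assumes "orthogonal_matrix (Q::real^'n^'n)"
  shows "((Q::real^'n^'n) ** K ** transpose Q) \<bullet> (Q ** L ** transpose Q) = K \<bullet> L"
  using cj_inner[of Q K "Q ** L ** transpose Q"] unc_cj[OF assms] by simp

lemma cj_norm: assumes "orthogonal_matrix (Q::real^'n^'n)"
  shows "norm (Q ** K ** transpose Q) = norm K"
  using cj_inner2[OF assms, of K K] by (simp add: norm_eq_sqrt_inner)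

lemma cj_add: "(Q::real^'n^'n) ** (K + L) ** transpose Q = Q ** K ** transpose Q + Q ** L ** transpose Q"
  by (simp add: matrix_add_ldistrib matrix_add_rdistrib)
lemma cj_diff: "(Q::real^'n^'n) ** (K - L) ** transpose Q = Q ** K ** transpose Q - Q ** L ** transpose Q"
  by (simp add: matrix_sub_ldistrib matrix_sub_rdistrib)
lemma cj_scale: "(Q::real^'n^'n) ** (c *\<^sub>R K) ** transpose Q = c *\<^sub>R (Q ** K ** transpose Q)"
  by (simp add: matrix_scalar_ac scalar_matrix_assoc)
lemma cj_transpose: "transpose ((Q::real^'n^'n) ** K ** transpose P) = P ** transpose K ** transpose Q"
  by (simp add: matrix_transpose_mul matrix_mul_assoc)

lemma Sym_subspace: "subspace (Sym :: (real^'n^'n) set)"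
  unfolding subspace_def Sym_def by (simp add: transpose_add transpose_scalar transpose_zero)

lemma hadamard_inner: "hadamard W K \<bullet> L = (\<Sum>i\<in>UNIV. \<Sum>j\<in>UNIV. W$i$j * K$i$j * L$i$j)"
  by (simp add: inner_mat_sum hadamard_def)

lemma hadamard_add: "hadamard W (K + L) = hadamard W K + hadamard W L"
  by (simp add: hadamard_def vec_eq_iff algebra_simps)
lemma hadamard_scale: "hadamard W (c *\<^sub>R K) = c *\<^sub>R hadamard W K"
  by (simp add: hadamard_def vec_eq_iff algebra_simps)
lemma hadamard_transpose: "transpose (hadamard W K) = hadamard (transpose W) (transpose K)"
  by (simp add: hadamard_def vec_eq_iff transpose_def)

lemma Omega_bounds: "0 \<le> Omega lam $ i $ j" "Omega lam $ i $ j \<le> 1"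
  by (auto simp: Omega_def divide_le_eq_1 divide_nonneg_pos)
lemma Omega_nth: "Omega lam $ i $ j =
     (if 0 < lam i \<and> 0 < lam j then 1
     else if lam i < 0 \<and> 0 < lam j then lam j / (lam j - lam i)
     else if 0 < lam i \<and> lam j < 0 then lam i / (lam i - lam j)
     else 0)"
  by (simp add: Omega_def)
lemma Omega_sym: "transpose (Omega lam) = Omega lam"
proof -
  have "Omega lam $ j $ i = Omega lam $ i $ j" for i j
    unfolding Omega_nth by (cases "0 < lam i"; cases "0 < lam j"; cases "lam i < 0"; cases "lam j < 0") simp_all
  thus ?thesis by (simp add: transpose_def vec_eq_iff)
qed
lemma Omega_mid: "lam i < 0 \<Longrightarrow> 0 < lam j \<Longrightarrow> 0 < Omega lam $ i $ j \<and> Omega lam $ i $ j < 1"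
  unfolding Omega_nth by (simp add: divide_pos_pos)

lemma Dop_inner: "Dop Q lam H \<bullet> G = hadamard (Omega lam) (transpose Q ** H ** Q) \<bullet> (transpose Q ** G ** Q)"
  unfolding Dop_def by (rule cj_inner)

lemma Dop_sa: "Dop Q lam H \<bullet> G = H \<bullet> Dop Q lam G"
  by (simp add: inner_commute[of H] Dop_inner hadamard_inner mult_ac)

lemma Dop_firm: assumes "orthogonal_matrix Q"
  shows "(norm (Dop Q lam H))\<^sup>2 \<le> Dop Q lam H \<bullet> H"
proof -
  let ?K = "transpose Q ** H ** Q"
  let ?W = "Omega lam"
  have "(norm (Dop Q lam H))\<^sup>2 = (norm (hadamard ?W ?K))\<^sup>2"
    unfolding Dop_def using cj_norm[OF assms] by simp
  also have "\<dots> = (\<Sum>i\<in>UNIV. \<Sum>j\<in>UNIV. (?W$i$j * ?W$i$j) * (?K$i$j * ?K$i$j))"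
    by (simp add: power2_norm_eq_inner hadamard_inner) (simp add: hadamard_def mult_ac)
  also have "\<dots> \<le> (\<Sum>i\<in>UNIV. \<Sum>j\<in>UNIV. ?W$i$j * (?K$i$j * ?K$i$j))"
  proof (intro sum_mono mult_right_mono)
    fix i j
    show "?W$i$j * ?W$i$j \<le> ?W$i$j" using Omega_bounds[of lam i j] by (metis mult_left_le mult.commute)
    show "0 \<le> ?K$i$j * ?K$i$j" by simp
  qed
  also have "\<dots> = Dop Q lam H \<bullet> H"
    by (simp add: Dop_inner hadamard_inner mult_ac)
  finally show ?thesis .
qed

lemma Dop_linear: "linear (Dop Q lam)"
  by (rule linearI) (simp_all add: Dop_def matrix_add_ldistrib matrix_add_rdistrib hadamard_add
      hadamard_scale matrix_scalar_ac scalar_matrix_assoc[symmetric])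

lemma Dop_Sym: "H \<in> Sym \<Longrightarrow> Dop Q lam H \<in> Sym"
  unfolding Sym_def Dop_def
  by (simp add: cj_transpose hadamard_transpose Omega_sym matrix_transpose_mul matrix_mul_assoc)

lemma Sym_transpose: "X \<in> Sym \<Longrightarrow> transpose X = X" by (simp add: Sym_def)

lemma Aop_inner: "(\<And>i. A i \<in> Sym) \<Longrightarrow> Aop A H = (\<chi> i. A i \<bullet> H)"
  unfolding Aop_def by (simp add: frob_sym Sym_transpose)

lemma inner_lambda: "(y::real^'m) \<bullet> (\<chi> i. f i) = (\<Sum>i\<in>UNIV. y$i * f i)"
  by (simp add: inner_vec_def)

lemma Astar_inner: "Astar A y \<bullet> G = y \<bullet> (\<chi> i. A i \<bullet> G)"
  by (simp only: Astar_def inner_sum_left inner_scaleR_left inner_lambda)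

lemma Astar_nth: "Astar A y $ i $ j = (\<Sum>k\<in>UNIV. y $ k * A k $ i $ j)"
  unfolding Astar_def by (simp add: sum_component)

lemma Astar_Sym: "(\<And>i. A i \<in> Sym) \<Longrightarrow> Astar A y \<in> Sym"
  unfolding Sym_def
  by (simp add: vec_eq_iff transpose_def Astar_nth)

lemma Astar_add: "Astar A (y + z) = Astar A y + Astar A z"
  unfolding Astar_def by (simp add: scaleR_add_left sum.distrib)
lemma Astar_scale: "Astar A (c *\<^sub>R y) = c *\<^sub>R Astar A y"
  unfolding Astar_def by (simp add: scaleR_sum_right)
lemma Astar_zero: "Astar A 0 = 0"
  unfolding Astar_def by simp

lemma Aop_add: "(\<And>i. A i \<in> Sym) \<Longrightarrow> Aop A (x + y) = Aop A x + Aop A y"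
  by (simp add: Aop_inner vec_eq_iff inner_add_right)
lemma Aop_scale: "(\<And>i. A i \<in> Sym) \<Longrightarrow> Aop A (c *\<^sub>R x) = c *\<^sub>R Aop A x"
  by (simp add: Aop_inner vec_eq_iff)
lemma Aop_zero: "(\<And>i. A i \<in> Sym) \<Longrightarrow> Aop A 0 = 0"
  by (simp add: Aop_inner vec_eq_iff)

lemma AAstar_inner: "(\<And>i. A i \<in> Sym) \<Longrightarrow> AAstar A = (\<chi> i j. A i \<bullet> A j)"
  unfolding AAstar_def by (simp add: frob_sym Sym_transpose)

lemma Aop_Astar: "(\<And>i. A i \<in> Sym) \<Longrightarrow> Aop A (Astar A y) = AAstar A *v y"
  by (simp add: Aop_inner AAstar_inner vec_eq_iff Astar_def inner_sum_right matrix_vector_mult_def mult.commute)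

lemma AAstar_sym: "(\<And>i. A i \<in> Sym) \<Longrightarrow> transpose (AAstar A) = AAstar A"
  by (simp add: AAstar_inner transpose_def vec_eq_iff inner_commute)

lemma AAstar_invertible:
  assumes As: "\<And>i. A i \<in> Sym" and surj: "Aop A ` Sym = UNIV"
  shows "invertible (AAstar A)"
proof -
  have "\<forall>y. AAstar A *v y = 0 \<longrightarrow> y = 0"
  proof (intro allI impI)
    fix y assume h: "AAstar A *v y = 0"
    have "Astar A y \<bullet> Astar A y = y \<bullet> Aop A (Astar A y)"
      by (simp add: Astar_inner Aop_inner[OF As])
    also have "\<dots> = 0" using h by (simp add: Aop_Astar[OF As])
    finally have z: "Astar A y = 0" by simp
    obtain H where "H \<in> Sym" "Aop A H = y" using surj by (metis UNIV_I imageE)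
    hence "y \<bullet> y = Astar A y \<bullet> H" by (simp add: Astar_inner Aop_inner[OF As])
    thus "y = 0" using z by simp
  qed
  thus ?thesis using matrix_left_invertible_ker invertible_left_inverse by blast
qed

lemma matrix_inv_works:
  assumes "invertible (G::real^'m^'m)"
  shows "G ** matrix_inv G = mat 1" "matrix_inv G ** G = mat 1"
proof -
  have "G ** matrix_inv G = mat 1 \<and> matrix_inv G ** G = mat 1"
    using assms unfolding invertible_def matrix_inv_def by (rule someI_ex)
  thus "G ** matrix_inv G = mat 1" "matrix_inv G ** G = mat 1" by auto
qed

lemma matrix_inv_sym:
  assumes "invertible (G::real^'m^'m)" "transpose G = G"
  shows "transpose (matrix_inv G) = matrix_inv G"
proof -
  have "transpose (matrix_inv G) ** G = mat 1"
    using arg_cong[OF matrix_inv_works(1)[OF assms(1)], of transpose] assms(2)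
    by (simp add: matrix_transpose_mul transpose_mat)
  hence "transpose (matrix_inv G) = transpose (matrix_inv G) ** (G ** matrix_inv G)"
    using matrix_inv_works(1)[OF assms(1)] by simp
  also have "\<dots> = matrix_inv G" 
    using \<open>transpose (matrix_inv G) ** G = mat 1\<close> by (simp add: matrix_mul_assoc)
  finally show ?thesis .
qed

lemma sym_mat_inner: "transpose (B::real^'m^'m) = B \<Longrightarrow> (B *v u) \<bullet> w = u \<bullet> (B *v w)"
  by (metis dot_lmul_matrix transpose_matrix_vector inner_commute)

lemma Pop_linear: "(\<And>i. A i \<in> Sym) \<Longrightarrow> linear (Pop A)"
  by (rule linearI) (simp_all add: Pop_def Aop_add Aop_scale Astar_add Astar_scale
      matrix_vector_right_distrib matrix_vector_mult_scaleR)

lemma Pop_Sym: "(\<And>i. A i \<in> Sym) \<Longrightarrow> Pop A H \<in> Sym"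
  unfolding Pop_def by (rule Astar_Sym)

lemma Aop_Pop:
  assumes As: "\<And>i. A i \<in> Sym" and surj: "Aop A ` Sym = UNIV"
  shows "Aop A (Pop A H) = Aop A H"
  unfolding Pop_def using matrix_inv_works(1)[OF AAstar_invertible[OF As surj]]
  by (simp add: Aop_Astar[OF As] matrix_vector_mul_assoc)

lemma Pop_idem:
  assumes As: "\<And>i. A i \<in> Sym" and surj: "Aop A ` Sym = UNIV"
  shows "Pop A (Pop A H) = Pop A H"
  by (metis Aop_Pop[OF As surj] Pop_def)

lemma Pop_sa:
  assumes As: "\<And>i. A i \<in> Sym" and surj: "Aop A ` Sym = UNIV"
  shows "Pop A H \<bullet> G = H \<bullet> Pop A G"
proof -
  have s: "transpose (matrix_inv (AAstar A)) = matrix_inv (AAstar A)"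
    by (rule matrix_inv_sym[OF AAstar_invertible[OF As surj] AAstar_sym[OF As]])
  have "Pop A H \<bullet> G = (matrix_inv (AAstar A) *v Aop A H) \<bullet> Aop A G"
    by (simp add: Pop_def Astar_inner Aop_inner[OF As])
  also have "\<dots> = Aop A H \<bullet> (matrix_inv (AAstar A) *v Aop A G)" by (rule sym_mat_inner[OF s])
  also have "\<dots> = (matrix_inv (AAstar A) *v Aop A G) \<bullet> Aop A H" by (rule inner_commute)
  also have "\<dots> = Pop A G \<bullet> H" by (simp add: Pop_def Astar_inner Aop_inner[OF As])
  also have "\<dots> = H \<bullet> Pop A G" by (rule inner_commute)
  finally show ?thesis .
qed

lemma Pop_zero: "(\<And>i. A i \<in> Sym) \<Longrightarrow> Aop A H = 0 \<Longrightarrow> Pop A H = 0"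
  by (simp add: Pop_def Astar_zero)

lemma Pop_Astar:
  assumes As: "\<And>i. A i \<in> Sym" and surj: "Aop A ` Sym = UNIV"
  shows "Pop A (Astar A y) = Astar A y"
  unfolding Pop_def using matrix_inv_works(2)[OF AAstar_invertible[OF As surj]]
  by (simp add: Aop_Astar[OF As] matrix_vector_mul_assoc)

lemma diag_entry: "(transpose Q ** Y ** Q)$i$i = column i Q \<bullet> (Y *v column i (Q::real^'n^'n))"
  by (simp add: matrix_matrix_mult_def matrix_vector_mult_def transpose_def column_def inner_vec_def
      sum_distrib_left sum_distrib_right mult_ac) (subst sum.swap, simp add: mult_ac)

lemma diagm_inner: "diagm d \<bullet> M = (\<Sum>i\<in>UNIV. d i * M$i$i)"
  by (simp add: inner_mat_sum diagm_def if_distrib if_distribR cong: if_cong)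

lemma psd_cj_diag:
  assumes "psd Y" "\<And>i. 0 \<le> d i"
  shows "0 \<le> Y \<bullet> ((Q::real^'n^'n) ** diagm d ** transpose Q)"
proof -
  have "Y \<bullet> (Q ** diagm d ** transpose Q) = diagm d \<bullet> (transpose Q ** Y ** Q)"
    by (simp add: inner_commute[of Y] cj_inner)
  also have "\<dots> = (\<Sum>i\<in>UNIV. d i * (column i Q \<bullet> (Y *v column i Q)))"
    by (simp add: diagm_inner diag_entry)
  also have "\<dots> \<ge> 0" using assms unfolding psd_def by (intro sum_nonneg mult_nonneg_nonneg) auto
  finally show ?thesis .
qed

lemma rank_cj_diag:
  assumes "\<And>i. d i \<noteq> 0 \<Longrightarrow> i \<in> I"
  shows "rank ((Q::real^'n^'n) ** diagm d ** transpose Q) \<le> card I"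
proof -
  have "range (\<lambda>x. (Q ** diagm d ** transpose Q) *v x) \<subseteq> span ((\<lambda>i. column i Q) ` I)"
  proof clarify
    fix x
    define w where "w = diagm d *v (transpose Q *v x)"
    have w0: "w $ i = 0" if "i \<notin> I" for i
      using assms[of i] that by (auto simp: w_def diagm_def matrix_vector_mult_def if_distrib if_distribR cong: if_cong)
    have "(Q ** diagm d ** transpose Q) *v x = Q *v w"
      by (simp only: w_def matrix_vector_mul_assoc matrix_mul_assoc)
    also have "\<dots> = (\<Sum>i\<in>UNIV. w$i *s column i Q)" by (rule matrix_mult_sum)
    also have "\<dots> = (\<Sum>i\<in>I. w$i *s column i Q)"
      by (rule sum.mono_neutral_right) (auto simp: w0)
    also have "\<dots> \<in> span ((\<lambda>i. column i Q) ` I)"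
      by (intro span_sum) (simp add: scalar_mult_eq_scaleR span_scale span_base)
    finally show "(Q ** diagm d ** transpose Q) *v x \<in> span ((\<lambda>i. column i Q) ` I)" .
  qed
  hence "dim (range (\<lambda>x. (Q ** diagm d ** transpose Q) *v x)) \<le> card ((\<lambda>i. column i Q) ` I)"
    by (intro dim_le_card) auto
  also have "\<dots> \<le> card I" by (rule card_image_le) simp
  finally show ?thesis by (simp add: rank_dim_range)
qed

lemma lam_nonzero:
  fixes Xs Ss Q :: "real^'n^'n" and lam :: "'n \<Rightarrow> real" and sigma :: real
  assumes psdX: "psd Xs" and psdS: "psd Ss" and compl: "frob_inner Xs Ss = 0"
    and strict: "rank Xs + rank Ss = CARD('n)" and sig: "0 < sigma"
    and Q: "orthogonal_matrix Q" and Z: "Xs - sigma *\<^sub>R Ss = Q ** diagm lam ** transpose Q"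
  shows "lam k \<noteq> 0"
proof
  assume lk: "lam k = 0"
  define lp where "lp = (\<lambda>i. max (lam i) 0)"
  define lng where "lng = (\<lambda>i. max (- lam i) 0)"
  define Pp where "Pp = Q ** diagm lp ** transpose Q"
  define Nn where "Nn = Q ** diagm lng ** transpose Q"
  have "diagm lam = diagm lp - diagm lng"
    by (auto simp: diagm_def vec_eq_iff lp_def lng_def max_def)
  hence hZ: "Xs - sigma *\<^sub>R Ss = Pp - Nn" using Z by (simp add: Pp_def Nn_def cj_diff)
  have XS0: "Xs \<bullet> Ss = 0" using compl psdX by (simp add: psd_def frob_sym)
  have "Pp \<bullet> Nn = diagm lp \<bullet> diagm lng" unfolding Pp_def Nn_def by (rule cj_inner2[OF Q])
  also have "\<dots> = 0" by (simp only: diagm_inner) (auto simp: diagm_def lp_def lng_def max_def intro!: sum.neutral)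
  finally have PN0: "Pp \<bullet> Nn = 0" .
  have XN: "0 \<le> Xs \<bullet> Nn" unfolding Nn_def by (rule psd_cj_diag[OF psdX]) (simp add: lng_def)
  have SP: "0 \<le> Ss \<bullet> Pp" unfolding Pp_def by (rule psd_cj_diag[OF psdS]) (simp add: lp_def)
  have E: "Xs - Pp = sigma *\<^sub>R Ss - Nn" using hZ by (simp add: algebra_simps)
  have "(Xs - Pp) \<bullet> (Xs - Pp) = (Xs - Pp) \<bullet> (sigma *\<^sub>R Ss - Nn)" using E by simp
  also have "\<dots> = sigma * (Xs \<bullet> Ss) - Xs \<bullet> Nn - sigma * (Ss \<bullet> Pp) + Pp \<bullet> Nn"
    by (simp add: inner_diff inner_commute algebra_simps)
  also have "\<dots> \<le> 0" using XN mult_nonneg_nonneg[OF less_imp_le[OF sig] SP] by (simp add: XS0 PN0)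
  finally have "(Xs - Pp) \<bullet> (Xs - Pp) = 0" using inner_ge_zero[of "Xs - Pp"] by linarith
  hence "Xs = Pp" by simp
  hence "sigma *\<^sub>R Ss = Nn" using E by simp
  hence "Ss = (1 / sigma) *\<^sub>R Nn" using sig by auto
  also have "\<dots> = Q ** diagm (\<lambda>i. lng i / sigma) ** transpose Q"
    unfolding Nn_def cj_scale[symmetric]
    by (rule arg_cong[where f="\<lambda>D. Q ** D ** transpose Q"]) (simp add: diagm_def vec_eq_iff)
  finally have Ss_eq: "Ss = Q ** diagm (\<lambda>i. lng i / sigma) ** transpose Q" .
  have r1: "rank Xs \<le> card {i. 0 < lam i}"
    unfolding \<open>Xs = Pp\<close> Pp_def by (rule rank_cj_diag) (simp add: lp_def max_def split: if_splits)
  have r2: "rank Ss \<le> card {i. lam i < 0}"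
    unfolding Ss_eq by (rule rank_cj_diag) (simp add: lng_def max_def split: if_splits)
  have "card {i. 0 < lam i} + card {i. lam i < 0} = card ({i. 0 < lam i} \<union> {i. lam i < 0})"
    by (rule card_Un_disjoint[symmetric]) auto
  also have "\<dots> \<le> card (UNIV - {k})" by (rule card_mono) (auto simp: lk)
  also have "\<dots> = CARD('n) - 1" by (simp add: card_Diff_singleton)
  finally have "rank Xs + rank Ss \<le> CARD('n) - 1" using r1 r2 by linarith
  moreover have "0 < CARD('n)" by simp
  ultimately show False using strict by linarith
qed

lemma split_K:
  assumes "blkO_zero lam K" "transpose K = K" "\<And>i. lam i \<noteq> 0"
  shows "K = blkX lam K + blkS lam K"
proof -
  have "K$i$j = blkX lam K $i$j + blkS lam K $i$j" for i j
  proof -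
    have kt: "K$i$j = K$j$i" using assms(2) by (metis transpose_def vec_lambda_beta)
    show ?thesis using assms(1) assms(3)[of i] assms(3)[of j] kt unfolding blkO_zero_def blkX_def blkS_def
      by (cases "lam i < 0"; cases "lam j < 0") (auto simp: not_less less_le)
  qed
  thus ?thesis by (simp add: vec_eq_iff)
qed

lemma had_K:
  assumes "blkO_zero lam K" "transpose K = K"
  shows "hadamard (Omega lam) K = blkX lam K"
proof -
  have "Omega lam $i$j * K$i$j = blkX lam K $i$j" for i j
  proof -
    have kt: "K$i$j = K$j$i" using assms(2) by (metis transpose_def vec_lambda_beta)
    show ?thesis using assms(1) kt unfolding blkO_zero_def blkX_def Omega_def
      by auto
  qed
  thus ?thesis by (simp add: vec_eq_iff hadamard_def)
qed

lemma blkO_from_norm: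
  assumes "norm (2 *\<^sub>R hadamard (Omega lam) K - K) = norm K"
  shows "blkO_zero lam K"
proof -
  let ?W = "Omega lam"
  define t where "t i j = (1 - (2 * ?W$i$j - 1)\<^sup>2) * (K$i$j)\<^sup>2" for i j
  have tnn: "0 \<le> t i j" for i j
  proof -
    have e: "(2 * ?W$i$j - 1)\<^sup>2 = 1 - 4 * (?W$i$j * (1 - ?W$i$j))"
      by (simp add: power2_eq_square algebra_simps)
    have "0 \<le> ?W$i$j * (1 - ?W$i$j)" using Omega_bounds[of lam i j] by simp
    hence "(2 * ?W$i$j - 1)\<^sup>2 \<le> 1" using e by linarith
    thus ?thesis unfolding t_def by simp
  qed
  have "(norm K)\<^sup>2 - (norm (2 *\<^sub>R hadamard ?W K - K))\<^sup>2 = (\<Sum>i\<in>UNIV. \<Sum>j\<in>UNIV. t i j)"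
    unfolding power2_norm_eq_inner inner_mat_sum t_def
    by (simp add: hadamard_def sum_subtractf[symmetric] power2_eq_square algebra_simps)
  hence s0: "(\<Sum>i\<in>UNIV. \<Sum>j\<in>UNIV. t i j) = 0" using assms by simp
  have "\<forall>i. (\<Sum>j\<in>UNIV. t i j) = 0"
    using s0 by (subst (asm) sum_nonneg_eq_0_iff) (auto intro: sum_nonneg tnn)
  hence tz: "t i j = 0" for i j by (simp add: sum_nonneg_eq_0_iff tnn)
  show ?thesis unfolding blkO_zero_def
  proof (intro allI impI)
    fix i j assume h: "lam i < 0 \<and> 0 < lam j"
    hence m: "0 < ?W$i$j \<and> ?W$i$j < 1" using Omega_mid by blast
    have e: "(2 * ?W$i$j - 1)\<^sup>2 = 1 - 4 * (?W$i$j * (1 - ?W$i$j))"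
      by (simp add: power2_eq_square algebra_simps)
    have "0 < ?W$i$j * (1 - ?W$i$j)" using m by simp
    hence "(2 * ?W$i$j - 1)\<^sup>2 < 1" using e by linarith
    hence "(K$i$j)\<^sup>2 = 0" using tz[of i j] unfolding t_def by simp
    thus "K$i$j = 0" by simp
  qed
qed

lemma Fix_char:
  fixes A :: "'m::finite \<Rightarrow> real^'n^'n" and Q :: "real^'n^'n" and lam :: "'n \<Rightarrow> real"
  assumes As: "\<And>i. A i \<in> Sym" and surj: "Aop A ` Sym = UNIV" and Q: "orthogonal_matrix Q"
    and lnz: "\<And>i. lam i \<noteq> 0" and HS: "H \<in> Sym"
  shows "Mop A Q lam H = H \<longleftrightarrow>
          (blkO_zero lam (transpose Q ** H ** Q)
           \<and> Aop A (Q ** blkX lam (transpose Q ** H ** Q) ** transpose Q) = 0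
           \<and> (\<exists>y. Q ** blkS lam (transpose Q ** H ** Q) ** transpose Q = Astar A y))"
proof -
  define K where "K = transpose Q ** H ** Q"
  define X where "X = Q ** blkX lam K ** transpose Q"
  define S where "S = Q ** blkS lam K ** transpose Q"
  have Kt: "transpose K = K" using HS
    by (simp add: K_def Sym_def matrix_transpose_mul matrix_mul_assoc)
  have HK: "H = Q ** K ** transpose Q" using cj_unc[OF Q] K_def by simp
  have DH: "Dop Q lam H = Q ** hadamard (Omega lam) K ** transpose Q" by (simp add: Dop_def K_def)
  have Mdef: "Mop A Q lam H = Pop A (H - Dop Q lam H) + (Dop Q lam H - Pop A (Dop Q lam H))"
    by (simp add: Mop_def Dperp_def Pperp_def)
  note linP = Pop_linear[OF As] and idem = Pop_idem[OF As surj] and sa = Pop_sa[OF As surj]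
  have struct: "H = X + S \<and> Dop Q lam H = X" if bo: "blkO_zero lam K"
  proof
    have "H = Q ** (blkX lam K + blkS lam K) ** transpose Q"
      using HK split_K[OF bo Kt lnz] by simp
    thus "H = X + S" unfolding X_def S_def by (simp add: cj_add)
    show "Dop Q lam H = X" unfolding DH X_def using had_K[OF bo Kt] by simp
  qed
  have "Mop A Q lam H = H \<longleftrightarrow> (blkO_zero lam K \<and> Aop A X = 0 \<and> (\<exists>y. S = Astar A y))"
  proof
    assume fx: "Mop A Q lam H = H"
    have fx': "Pop A (H - Dop Q lam H) + (Dop Q lam H - Pop A (Dop Q lam H)) = H" using fx Mdef by simp
    note f = dr_fix[OF linP idem sa, where D="Dop Q lam" and x=H, OF fx']
    have e: "2 *\<^sub>R Dop Q lam H - H = Q ** (2 *\<^sub>R hadamard (Omega lam) K - K) ** transpose Q"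
      by (simp add: cj_diff cj_scale DH HK[symmetric])
    have "norm (2 *\<^sub>R hadamard (Omega lam) K - K) = norm K"
      using f(1) unfolding e using cj_norm[OF Q] HK by metis
    hence bo: "blkO_zero lam K" by (rule blkO_from_norm)
    have hs: "H = X + S" and dx: "Dop Q lam H = X" using struct[OF bo] by auto
    have "2 *\<^sub>R Dop Q lam H - H = X - S" unfolding dx by (subst hs) (simp add: scaleR_2)
    hence "2 *\<^sub>R Pop A (X - S) - (X - S) = - (X + S)" using f(2) hs by simp
    note ps = proj_split[OF linP idem sa this]
    have "Aop A X = Aop A (Pop A X)" by (simp add: Aop_Pop[OF As surj])
    also have "\<dots> = 0" using ps(1) by (simp add: Aop_zero[OF As])
    finally have aX: "Aop A X = 0" .
    have "S = Astar A (matrix_inv (AAstar A) *v Aop A S)" using ps(2) by (simp add: Pop_def)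
    thus "blkO_zero lam K \<and> Aop A X = 0 \<and> (\<exists>y. S = Astar A y)" using bo aX by blast
  next
    assume h: "blkO_zero lam K \<and> Aop A X = 0 \<and> (\<exists>y. S = Astar A y)"
    then obtain y where y: "S = Astar A y" by blast
    have hs: "H = X + S" and dx: "Dop Q lam H = X" using struct h by auto
    have pX: "Pop A X = 0" by (rule Pop_zero) (use As h in auto)
    have pS: "Pop A S = S" using y Pop_Astar[OF As surj] by simp
    have "H - Dop Q lam H = S" using hs dx by simp
    thus "Mop A Q lam H = H" using Mdef pX pS hs dx by simp
  qed
  thus ?thesis unfolding K_def X_def S_def .
qed

theorem proposition1:
  fixes A :: "'m::finite \<Rightarrow> real^'n^'n"
    and b :: "real^'m" and C :: "real^'n^'n"
    and Xs Ss :: "real^'n^'n" and ys :: "real^'m" and sigma :: real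
    and Q :: "real^'n^'n" and lam :: "'n \<Rightarrow> real"
  assumes A_sym: "\<And>i. A i \<in> Sym"
    and A_surj: "Aop A ` Sym = UNIV"
    and C_sym: "C \<in> Sym"
    and primal: "Aop A Xs = b" "psd Xs"
    and dual: "Astar A ys + Ss = C" "psd Ss"
    and compl: "frob_inner Xs Ss = 0"
    and strict: "rank Xs + rank Ss = CARD('n)"
    and sigma_pos: "0 < sigma"
    and Q_orth: "orthogonal_matrix Q"
    and Z_eig: "Xs - sigma *\<^sub>R Ss = Q ** diagm lam ** transpose Q"
  shows "(\<forall>H\<in>Sym. frob_inner (Mop A Q lam H) H \<ge> (norm (Mop A Q lam H))\<^sup>2)
    \<and> ((\<lambda>k. opnormS (\<lambda>H. (Mop A Q lam ^^ k) H - closest_point (FixM A Q lam) H))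
          \<longlonglongrightarrow> 0)
    \<and> (\<forall>H\<in>Sym. H \<in> FixM A Q lam \<longleftrightarrow>
          (blkO_zero lam (transpose Q ** H ** Q)
           \<and> Aop A (Q ** blkX lam (transpose Q ** H ** Q) ** transpose Q) = 0
           \<and> (\<exists>y. Q ** blkS lam (transpose Q ** H ** Q) ** transpose Q = Astar A y)))
    \<and> opnormS (\<lambda>H. Mop A Q lam H - closest_point (FixM A Q lam) H) < 1"
proof -
  have lnz: "\<And>i. lam i \<noteq> 0"
    by (rule lam_nonzero[OF primal(2) dual(2) compl strict sigma_pos Q_orth Z_eig])
  have linP: "linear (Pop A)" by (rule Pop_linear) (rule A_sym)
  have idem: "\<And>y. Pop A (Pop A y) = Pop A y" by (rule Pop_idem) (rule A_sym, rule A_surj)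
  have sa: "\<And>y z. Pop A y \<bullet> z = y \<bullet> Pop A z" by (rule Pop_sa) (rule A_sym, rule A_surj)
  have Meq: "Mop A Q lam H = Pop A (H - Dop Q lam H) + (Dop Q lam H - Pop A (Dop Q lam H))" for H
    by (simp add: Mop_def Dperp_def Pperp_def)
  have firm: "\<forall>H. (norm (Mop A Q lam H))\<^sup>2 \<le> Mop A Q lam H \<bullet> H"
  proof
    fix H
    show "(norm (Mop A Q lam H))\<^sup>2 \<le> Mop A Q lam H \<bullet> H"
      unfolding Meq by (rule dr_firm[OF linP idem sa, where D="Dop Q lam"]) (rule Dop_firm[OF Q_orth])
  qed
  have linD: "linear (Dop Q lam)" by (rule Dop_linear)
  have linM: "linear (Mop A Q lam)"
    unfolding Meq[abs_def]
    by (rule linearI) (simp_all add: linear_add[OF linP] linear_add[OF linD] linear_diff[OF linP]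
        linear_scale[OF linP] linear_scale[OF linD] algebra_simps)
  have MS: "\<forall>H\<in>Sym. Mop A Q lam H \<in> Sym"
  proof
    fix H :: "real^'n^'n" assume H: "H \<in> Sym"
    show "Mop A Q lam H \<in> Sym" unfolding Meq
      by (intro subspace_add[OF Sym_subspace] subspace_diff[OF Sym_subspace] Pop_Sym Dop_Sym H A_sym)
  qed
  have FixM_eq: "FixM A Q lam = {x \<in> Sym. Mop A Q lam x = x}" by (simp add: FixM_def)
  obtain c where c0: "0 \<le> c" and c1: "c < 1"
    and bnd: "\<And>k x. x \<in> Sym \<Longrightarrow> norm ((Mop A Q lam ^^ k) x - closest_point (FixM A Q lam) x) \<le> c^k * norm x"
    using contraction_part[OF linM Sym_subspace MS firm] unfolding FixM_eq[symmetric] by blast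
  have partA: "\<forall>H\<in>Sym. frob_inner (Mop A Q lam H) H \<ge> (norm (Mop A Q lam H))\<^sup>2"
  proof
    fix H :: "real^'n^'n" assume H: "H \<in> Sym"
    have "frob_inner (Mop A Q lam H) H = frob_inner H (Mop A Q lam H)"
      unfolding frob_inner_def by (rule trace_mul_sym)
    also have "\<dots> = H \<bullet> Mop A Q lam H" using H by (simp add: frob_sym Sym_transpose)
    also have "\<dots> = Mop A Q lam H \<bullet> H" by (rule inner_commute)
    finally show "frob_inner (Mop A Q lam H) H \<ge> (norm (Mop A Q lam H))\<^sup>2" using firm by simp
  qed
  have ob: "opnormS (\<lambda>H. (Mop A Q lam ^^ k) H - closest_point (FixM A Q lam) H) \<le> c^k"
    "0 \<le> opnormS (\<lambda>H. (Mop A Q lam ^^ k) H - closest_point (FixM A Q lam) H)" for k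
    using opnormS_bound[of "\<lambda>H. (Mop A Q lam ^^ k) H - closest_point (FixM A Q lam) H" "c^k"]
      bnd c0 by auto
  have partB: "(\<lambda>k. opnormS (\<lambda>H. (Mop A Q lam ^^ k) H - closest_point (FixM A Q lam) H)) \<longlonglongrightarrow> 0"
  proof (rule Lim_null_comparison)
    show "\<forall>\<^sub>F k in sequentially. norm (opnormS (\<lambda>H. (Mop A Q lam ^^ k) H - closest_point (FixM A Q lam) H)) \<le> c^k"
      using ob by simp
    show "(\<lambda>k. c^k) \<longlonglongrightarrow> 0" by (rule LIMSEQ_power_zero) (use c0 c1 in simp)
  qed
  have partC: "\<forall>H\<in>Sym. H \<in> FixM A Q lam \<longleftrightarrow>
          (blkO_zero lam (transpose Q ** H ** Q)
           \<and> Aop A (Q ** blkX lam (transpose Q ** H ** Q) ** transpose Q) = 0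
           \<and> (\<exists>y. Q ** blkS lam (transpose Q ** H ** Q) ** transpose Q = Astar A y))"
  proof
    fix H :: "real^'n^'n" assume H: "H \<in> Sym"
    have "H \<in> FixM A Q lam \<longleftrightarrow> Mop A Q lam H = H" using H by (simp add: FixM_def)
    thus "H \<in> FixM A Q lam \<longleftrightarrow>
          (blkO_zero lam (transpose Q ** H ** Q)
           \<and> Aop A (Q ** blkX lam (transpose Q ** H ** Q) ** transpose Q) = 0
           \<and> (\<exists>y. Q ** blkS lam (transpose Q ** H ** Q) ** transpose Q = Astar A y))"
      using Fix_char[OF A_sym A_surj Q_orth lnz H] by simp
  qed
  have partD: "opnormS (\<lambda>H. Mop A Q lam H - closest_point (FixM A Q lam) H) < 1"
    using ob(1)[of 1] c1 by simp
  show ?thesis using partA partB partC partD by blast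
qed

end
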